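(* Let $f\in C^{1,1}_L(\mathbb{R}^n)$, let $\mathcal{Y}=\{y_1,\dots,y_{n+1}\}\subset\mathbb{R}^n$ be affinely independent, let $m$ be the affine function interpolating $f$ on $\mathcal{Y}$, and let $y_0\in\mathbb{R}^n$ with barycentric coordinates $\ell_1,\dots,\ell_{n+1}$ and $\ell_0=-1$. Define $$w=\frac{\sum_{i=0}^{n+1}|\ell_i|\,y_i}{\sum_{i=0}^{n+1}|\ell_i|}.$$ Then $$|m(y_0)-f(y_0)|\le \frac{L}{2}\sum_{i=0}^{n+1}|\ell_i|\,\|y_i-w\|^2,$$ and $w$ minimizes $u\mapsto \frac{L}{2}\sum_{i=0}^{n+1}|\ell_i|\,\|y_i-u\|^2$ over $u\in\mathbb{R}^n$.
   Context: Let $n\ge1$ and $L>0$. $C^{1,1}_L(\mathbb{R}^n)$ denotes the set of differentiable functions $f:\mathbb{R}^n\to\mathbb{R}$ with $\|\nabla f(u_1)-\nabla f(u_2)\|\le L\|u_1-u_2\|$ for all $u_1,u_2\in\mathbb{R}^n$ (Euclidean norm). For an affinely independent set $\mathcal{Y}=\{y_1,\dots,y_{n+1}\}\subset\mathbb{R}^n$, the interpolating affine function $m$ is the unique affine $m:\mathbb{R}^n\to\mathbb{R}$ with $m(y_i)=f(y_i)$ for $i=1,\dots,n+1$. The barycentric coordinates of $y_0\in\mathbb{R}^n$ with respect to $\mathcal{Y}$ are the unique reals $\ell_1,\dots,\ell_{n+1}$ with $\sum_{i=1}^{n+1}\ell_i=1$ and $\sum_{i=1}^{n+1}\ell_iy_i=y_0$;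 one sets $\ell_0=-1$, so that $\sum_{i=0}^{n+1}\ell_i=0$, $\sum_{i=0}^{n+1}\ell_iy_i=0$, and $m(y_0)=\sum_{i=1}^{n+1}\ell_if(y_i)$. *)

theory Defs
  imports "HOL-Analysis.Analysis"
begin

definition C11 :: "real \<Rightarrow> ('a::euclidean_space \<Rightarrow> real) \<Rightarrow> bool" where
  "C11 L f \<longleftrightarrow> (\<exists>g::'a \<Rightarrow> 'a.
      (\<forall>u. (f has_derivative (\<lambda>h. g u \<bullet> h)) (at u)) \<and>
      (\<forall>u1 u2. norm (g u1 - g u2) \<le> L * norm (u1 - u2)))"

definition affine_fun :: "('a::euclidean_space \<Rightarrow> real) \<Rightarrow> bool" where
  "affine_fun m \<longleftrightarrow> (\<exists>a b. \<forall>x. m x = a \<bullet> x + b)"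

end

theory Submission
  imports Defs
begin

lemma taylor_one_side:
  fixes f :: "'a::euclidean_space \<Rightarrow> real" and g :: "'a \<Rightarrow> 'a"
  assumes der: "\<And>u. (f has_derivative (\<lambda>h. g u \<bullet> h)) (at u)"
    and lip: "\<And>u1 u2. norm (g u1 - g u2) \<le> L * norm (u1 - u2)"
  shows "f y - f u - g u \<bullet> (y - u) \<le> L / 2 * (norm (y - u))\<^sup>2"
proof -
  define h where "h = y - u"
  define K where "K = L * (norm h)\<^sup>2"
  define \<psi> where "\<psi> t = f (u + t *\<^sub>R h) - t * (g u \<bullet> h) - K * t\<^sup>2 / 2" for t
  have dp: "((\<lambda>t. f (u + t *\<^sub>R h)) has_real_derivative (g (u + t *\<^sub>R h) \<bullet> h)) (at t)" for t
  proof -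
    have "((\<lambda>t. u + t *\<^sub>R h) has_derivative (\<lambda>s. s *\<^sub>R h)) (at t)"
      by (auto intro!: derivative_eq_intros)
    from has_derivative_compose[OF this der]
    have "((\<lambda>t. f (u + t *\<^sub>R h)) has_derivative (\<lambda>s. g (u + t *\<^sub>R h) \<bullet> (s *\<^sub>R h))) (at t)" .
    moreover have "(\<lambda>s. g (u + t *\<^sub>R h) \<bullet> (s *\<^sub>R h)) = (*) (g (u + t *\<^sub>R h) \<bullet> h)"
      by (auto simp: mult.commute)
    ultimately show ?thesis by (simp add: has_field_derivative_def)
  qed
  have "\<psi> 1 \<le> \<psi> 0"
  proof (rule DERIV_nonpos_imp_nonincreasing[of 0 1 \<psi>])
    fix t :: real assume t: "0 \<le> t" "t \<le> 1"
    have d: "(\<psi> has_real_derivative (g (u + t *\<^sub>R h) \<bullet> h - g u \<bullet> h - K * t)) (at t)"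
      unfolding \<psi>_def[abs_def]
      by (rule derivative_eq_intros dp refl | simp)+
    have "g (u + t *\<^sub>R h) \<bullet> h - g u \<bullet> h = (g (u + t *\<^sub>R h) - g u) \<bullet> h"
      by (simp add: inner_diff_left)
    also have "\<dots> \<le> norm (g (u + t *\<^sub>R h) - g u) * norm h"
      by (rule norm_cauchy_schwarz)
    also have "\<dots> \<le> (L * norm (t *\<^sub>R h)) * norm h"
      using lip[of "u + t *\<^sub>R h" u] by (intro mult_right_mono) auto
    also have "\<dots> = K * t" using t by (simp add: K_def power2_eq_square)
    finally show "\<exists>y. (\<psi> has_real_derivative y) (at t) \<and> y \<le> 0" using d by auto
  qed simp
  then show ?thesis by (simp add: \<psi>_def K_def h_def)
qed

lemma taylor_abs:
  fixes f :: "'a::euclidean_space \<Rightarrow> real" and g :: "'a \<Rightarrow> 'a"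
  assumes der: "\<And>u. (f has_derivative (\<lambda>h. g u \<bullet> h)) (at u)"
    and lip: "\<And>u1 u2. norm (g u1 - g u2) \<le> L * norm (u1 - u2)"
  shows "\<bar>f y - f u - g u \<bullet> (y - u)\<bar> \<le> L / 2 * (norm (y - u))\<^sup>2"
proof -
  have der': "\<And>u. ((\<lambda>x. - f x) has_derivative (\<lambda>h. (- g u) \<bullet> h)) (at u)"
    using der by (auto intro!: derivative_eq_intros)
  have lip': "\<And>u1 u2. norm ((- g u1) - (- g u2)) \<le> L * norm (u1 - u2)"
    using lip by (metis minus_diff_eq minus_diff_minus norm_minus_commute)
  show ?thesis
    using taylor_one_side[OF der lip, of y u] taylor_one_side[OF der' lip', of y u]
    by (simp add: inner_minus_left) (auto split: abs_split)
qed
theorem corollary3p2: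
  fixes f :: "'a::euclidean_space \<Rightarrow> real"
    and L :: real
    and y :: "nat \<Rightarrow> 'a"
    and m :: "'a \<Rightarrow> real"
    and l :: "nat \<Rightarrow> real"
    and y0 :: 'a
  assumes L: "L > 0"
    and f: "C11 L f"
    and inj: "inj_on y {1..DIM('a)+1}"
    and indep: "\<not> affine_dependent (y ` {1..DIM('a)+1})"
    and m_aff: "affine_fun m"
    and m_interp: "\<forall>i\<in>{1..DIM('a)+1}. m (y i) = f (y i)"
    and bary1: "(\<Sum>i=1..DIM('a)+1. l i) = 1"
    and bary2: "(\<Sum>i=1..DIM('a)+1. l i *\<^sub>R y i) = y0"
  shows "let l' = l(0 := -1); y' = y(0 := y0);
             w = (\<Sum>i=0..DIM('a)+1. \<bar>l' i\<bar> *\<^sub>R y' i) /\<^sub>R (\<Sum>i=0..DIM('a)+1. \<bar>l' i\<bar>);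
             F = (\<lambda>u. L / 2 * (\<Sum>i=0..DIM('a)+1. \<bar>l' i\<bar> * (norm (y' i - u))\<^sup>2))
         in \<bar>m y0 - f y0\<bar> \<le> F w \<and> (\<forall>u. F w \<le> F u)"
proof -
  obtain g :: "'a \<Rightarrow> 'a" where der: "\<And>u. (f has_derivative (\<lambda>h. g u \<bullet> h)) (at u)"
    and lip: "\<And>u1 u2. norm (g u1 - g u2) \<le> L * norm (u1 - u2)"
    using f unfolding C11_def by blast
  obtain a b where ab: "\<And>x. m x = a \<bullet> x + b" using m_aff unfolding affine_fun_def by blast
  define N where "N = DIM('a) + 1"
  define l' where "l' = l(0 := -1)"
  define y' where "y' = y(0 := y0)"
  define S where "S = (\<Sum>i=0..N. \<bar>l' i\<bar>)"
  define w where "w = (\<Sum>i=0..N. \<bar>l' i\<bar> *\<^sub>R y' i) /\<^sub>R S"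
  define F where "F = (\<lambda>u. L / 2 * (\<Sum>i=0..N. \<bar>l' i\<bar> * (norm (y' i - u))\<^sup>2))"
  have split: "\<And>h :: nat \<Rightarrow> 'b::comm_monoid_add. (\<Sum>i=0..N. h i) = h 0 + (\<Sum>i=1..N. h i)"
    unfolding N_def by (subst sum.atLeast_Suc_atMost) auto
  have eq1: "\<And>h :: nat \<Rightarrow> real \<Rightarrow> 'a \<Rightarrow> 'b::comm_monoid_add. (\<Sum>i=1..N. h i (l' i) (y' i)) = (\<Sum>i=1..N. h i (l i) (y i))"
    unfolding l'_def y'_def by (rule sum.cong) auto
  have b1: "(\<Sum>i=1..N. l i) = 1" unfolding N_def by (rule bary1)
  have b2: "(\<Sum>i=1..N. l i *\<^sub>R y i) = y0" unfolding N_def by (rule bary2)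
  have s0: "(\<Sum>i=0..N. l' i) = 0"
    using split[of l'] eq1[of "\<lambda>i a b. a"] b1 by (simp add: l'_def)
  have s1: "(\<Sum>i=0..N. l' i *\<^sub>R y' i) = 0"
    using split[of "\<lambda>i. l' i *\<^sub>R y' i"] eq1[of "\<lambda>i a b. a *\<^sub>R b"] b2
    by (simp add: l'_def y'_def)
  have my0: "m y0 = (\<Sum>i=1..N. l i * f (y i))"
  proof -
    have "m y0 = (\<Sum>i=1..N. l i * (a \<bullet> y i)) + b * (\<Sum>i=1..N. l i)"
    proof -
      have "a \<bullet> y0 = (\<Sum>i=1..N. l i * (a \<bullet> y i))"
        unfolding b2[symmetric] by (simp add: inner_sum_right)
      then show ?thesis using b1 by (simp add: ab)
    qed
    also have "\<dots> = (\<Sum>i=1..N. l i * m (y i))"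
      by (simp add: ab sum_distrib_left sum.distrib algebra_simps)
    also have "\<dots> = (\<Sum>i=1..N. l i * f (y i))"
      using m_interp by (intro sum.cong) (auto simp: N_def)
    finally show ?thesis .
  qed
  have mf: "m y0 - f y0 = (\<Sum>i=0..N. l' i * f (y' i))"
    using split[of "\<lambda>i. l' i * f (y' i)"] eq1[of "\<lambda>i a b. a * f b"] my0
    by (simp add: l'_def y'_def)
  have bound: "\<bar>m y0 - f y0\<bar> \<le> F u" for u
  proof -
    have lin: "(\<Sum>i=0..N. l' i * (f u + g u \<bullet> (y' i - u))) = 0"
    proof -
      have "(\<Sum>i=0..N. l' i * (f u + g u \<bullet> (y' i - u)))
          = f u * (\<Sum>i=0..N. l' i) + g u \<bullet> (\<Sum>i=0..N. l' i *\<^sub>R y' i) - (g u \<bullet> u) * (\<Sum>i=0..N. l' i)"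
        by (simp add: algebra_simps sum_distrib_left sum_distrib_right sum.distrib sum_subtractf inner_sum_right)
      then show ?thesis using s0 s1 by simp
    qed
    have "m y0 - f y0 = (\<Sum>i=0..N. l' i * (f (y' i) - f u - g u \<bullet> (y' i - u)))"
      using mf lin by (simp add: algebra_simps sum.distrib sum_subtractf)
    also have "\<bar>\<dots>\<bar> \<le> (\<Sum>i=0..N. \<bar>l' i * (f (y' i) - f u - g u \<bullet> (y' i - u))\<bar>)"
      by (rule sum_abs)
    also have "\<dots> \<le> (\<Sum>i=0..N. \<bar>l' i\<bar> * (L / 2 * (norm (y' i - u))\<^sup>2))"
      unfolding abs_mult by (intro sum_mono mult_left_mono taylor_abs[OF der lip]) auto
    also have "\<dots> = F u" by (simp add: F_def sum_distrib_left algebra_simps)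
    finally show ?thesis .
  qed
  have Spos: "S > 0"
  proof -
    have "S = 1 + (\<Sum>i=1..N. \<bar>l' i\<bar>)" using split[of "\<lambda>i. \<bar>l' i\<bar>"] by (simp add: S_def l'_def)
    moreover have "(\<Sum>i=1..N. \<bar>l' i\<bar>) \<ge> 0" by (rule sum_nonneg) auto
    ultimately show ?thesis by linarith
  qed
  have Sw: "S *\<^sub>R w = (\<Sum>i=0..N. \<bar>l' i\<bar> *\<^sub>R y' i)" using Spos by (simp add: w_def)
  have minim: "F w \<le> F u" for u
  proof -
    have nsq: "(norm (y' i - u))\<^sup>2 = (norm (y' i - w))\<^sup>2 + 2 * ((y' i - w) \<bullet> (w - u)) + (norm (w - u))\<^sup>2" for i
      by (simp add: power2_norm_eq_inner algebra_simps inner_commute)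
    have cross: "(\<Sum>i=0..N. \<bar>l' i\<bar> * ((y' i - w) \<bullet> (w - u))) = 0"
    proof -
      have "(\<Sum>i=0..N. \<bar>l' i\<bar> * ((y' i - w) \<bullet> (w - u)))
          = ((\<Sum>i=0..N. \<bar>l' i\<bar> *\<^sub>R y' i) - S *\<^sub>R w) \<bullet> (w - u)"
        by (simp add: S_def inner_diff_left inner_sum_left sum_distrib_right algebra_simps sum_subtractf scaleR_sum_left sum.distrib)
      then show ?thesis using Sw by simp
    qed
    have "(\<Sum>i=0..N. \<bar>l' i\<bar> * (norm (y' i - u))\<^sup>2)
        = (\<Sum>i=0..N. \<bar>l' i\<bar> * (norm (y' i - w))\<^sup>2) + 2 * (\<Sum>i=0..N. \<bar>l' i\<bar> * ((y' i - w) \<bullet> (w - u))) + S * (norm (w - u))\<^sup>2"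
      unfolding nsq by (simp add: S_def distrib_left sum.distrib sum_distrib_left sum_distrib_right mult.left_commute)
    then have "(\<Sum>i=0..N. \<bar>l' i\<bar> * (norm (y' i - w))\<^sup>2) \<le> (\<Sum>i=0..N. \<bar>l' i\<bar> * (norm (y' i - u))\<^sup>2)"
      using cross Spos by simp
    then show ?thesis unfolding F_def using L by simp
  qed
  show ?thesis
    unfolding Let_def
    using bound[of w] minim
    by (simp add: F_def w_def S_def N_def l'_def y'_def)
qed

end
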